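(* For any number of features $D$, given $\pi_1=\epsilon$ small, the two positive regions $\mathbb R^D_{++}$ and $-\mathbb R^D_{++}$ are stable for EM. That is, $M(\boldsymbol\lambda)\succ\boldsymbol\lambda$ for all feasible $\boldsymbol\lambda\succ0$, and $M(\boldsymbol\lambda)\prec\boldsymbol\lambda$ for all feasible $\boldsymbol\lambda\prec0$.
   Context: Setting: a mixture of two Bernoullis on $\{0,1\}^D$. - The true distribution is $p^*=\pi_1^*B(\cdot\mid\boldsymbol\mu_1^* )+\pi_2^*B(\cdot\mid\boldsymbol\mu_2^* )$, where $B(\mathbf x\mid\boldsymbol\mu)=\prod_i\mu_i^{x_i}(1-\mu_i)^{1-x_i}$ and $\pi_1^*\in(0,1)$. - It is fitted by population EM to the model $\pi_1B(\cdot\mid\boldsymbol\mu_1)+\pi_2B(\cdot\mid\boldsymbol\mu_2)$. Notation: - $\overline{\mathbf x}=\mathbb E_{p^*}[\mathbf x]$, $S_i=\overline x_i(1-\overline x_i)$ and $\boldsymbol\mu^*=(\boldsymbol\mu_1^*-\boldsymbol\mu_2^* )/2$. - Take $\boldsymbol\mu_2=\overline{\mathbf x}$, set $\mathbf b=\boldsymbol\mu_1-\overline{\mathbf x}$ and $\lambda_i=2S_i^{-1}\mu_i^*b_i$. - The feasible domain is $\{\boldsymbol\lambda(\boldsymbol\mu_1):\boldsymbol\mu_1\in[0,1]^D\}$. - $Z_1(\boldsymbol\lambda)=\pi_1^*\prod_i(1+\pi_2^*\lambda_i)+\pi_2^*\prod_i(1-\pi_1^*\lambda_i)$. - $B_{1i}=\prod_{j\ne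 i}(1+\pi_2^*\lambda_j)$, $B_{2i}=\prod_{j\ne i}(1-\pi_1^*\lambda_j)$, and $\Lambda_i=\mu_{1i}(1-\mu_{1i})$. EM update: - In the one-cluster regime ($\pi_1$ small), the population EM update of $\boldsymbol\mu_1$ is, to leading order, the mean of the normalized distribution proportional to $p^*(\mathbf x)B(\mathbf x\mid\boldsymbol\mu_1)/B(\mathbf x\mid\overline{\mathbf x})$. - $M(\boldsymbol\lambda)$ denotes the image of this updated $\boldsymbol\mu_1$ under the affine map $\boldsymbol\mu_1\mapsto\boldsymbol\lambda$. Explicitly, $$M(\boldsymbol\lambda)_i=\lambda_i+(2S_i^{-1}\mu_i^* )^2\pi_1^*\pi_2^*\frac{\Lambda_i}{Z_1(\boldsymbol\lambda)}(B_{1i}-B_{2i}).$$ $\succ$ and $\prec$ denote strict componentwise order. Standing assumption: $\sigma_{ij}=4\pi_1^*\pi_2^*\mu_i^*\mu_j^*\ne0$ for all $i\ne j$. *)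

theory Defs
  imports Complex_Main
begin

text \<open>Mixture of two Bernoullis on a finite feature index type 'n (D = CARD('n)).
  Parameters: p1 = pi_1^*, p2 = pi_2^* = 1 - p1, m1 = mu_1^*, m2 = mu_2^*.\<close>

definition xbar :: "real \<Rightarrow> ('n \<Rightarrow> real) \<Rightarrow> ('n \<Rightarrow> real) \<Rightarrow> 'n \<Rightarrow> real" where
  "xbar p1 m1 m2 i = p1 * m1 i + (1 - p1) * m2 i"

definition Svar :: "real \<Rightarrow> ('n \<Rightarrow> real) \<Rightarrow> ('n \<Rightarrow> real) \<Rightarrow> 'n \<Rightarrow> real" where
  "Svar p1 m1 m2 i = xbar p1 m1 m2 i * (1 - xbar p1 m1 m2 i)"

definition mustar :: "('n \<Rightarrow> real) \<Rightarrow> ('n \<Rightarrow> real) \<Rightarrow> 'n \<Rightarrow> real" where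
  "mustar m1 m2 i = (m1 i - m2 i) / 2"

definition coef :: "real \<Rightarrow> ('n \<Rightarrow> real) \<Rightarrow> ('n \<Rightarrow> real) \<Rightarrow> 'n \<Rightarrow> real" where
  "coef p1 m1 m2 i = 2 * inverse (Svar p1 m1 m2 i) * mustar m1 m2 i"

definition lam :: "real \<Rightarrow> ('n \<Rightarrow> real) \<Rightarrow> ('n \<Rightarrow> real) \<Rightarrow> ('n \<Rightarrow> real) \<Rightarrow> 'n \<Rightarrow> real" where
  "lam p1 m1 m2 mu1 i = coef p1 m1 m2 i * (mu1 i - xbar p1 m1 m2 i)"

definition mu1_of :: "real \<Rightarrow> ('n \<Rightarrow> real) \<Rightarrow> ('n \<Rightarrow> real) \<Rightarrow> ('n \<Rightarrow> real) \<Rightarrow> 'n \<Rightarrow> real" where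
  "mu1_of p1 m1 m2 l i = xbar p1 m1 m2 i + l i / coef p1 m1 m2 i"

definition Z1 :: "real \<Rightarrow> ('n::finite \<Rightarrow> real) \<Rightarrow> real" where
  "Z1 p1 l = p1 * (\<Prod>j\<in>UNIV. 1 + (1 - p1) * l j) + (1 - p1) * (\<Prod>j\<in>UNIV. 1 - p1 * l j)"

definition B1 :: "real \<Rightarrow> ('n::finite \<Rightarrow> real) \<Rightarrow> 'n \<Rightarrow> real" where
  "B1 p1 l i = (\<Prod>j\<in>UNIV - {i}. 1 + (1 - p1) * l j)"

definition B2 :: "real \<Rightarrow> ('n::finite \<Rightarrow> real) \<Rightarrow> 'n \<Rightarrow> real" where
  "B2 p1 l i = (\<Prod>j\<in>UNIV - {i}. 1 - p1 * l j)"

text \<open>The (leading-order, one-cluster regime) EM map in lambda coordinates.\<close>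
definition EM_M :: "real \<Rightarrow> ('n::finite \<Rightarrow> real) \<Rightarrow> ('n \<Rightarrow> real) \<Rightarrow> ('n \<Rightarrow> real) \<Rightarrow> 'n \<Rightarrow> real" where
  "EM_M p1 m1 m2 l i =
     (let mu = mu1_of p1 m1 m2 l i; Lam = mu * (1 - mu) in
      l i + (coef p1 m1 m2 i)^2 * p1 * (1 - p1) * Lam / Z1 p1 l * (B1 p1 l i - B2 p1 l i))"

end

theory Submission
  imports Defs
begin

lemma xbar_bounds:
  fixes a b p :: real
  assumes "0 \<le> a" "a \<le> 1" "0 \<le> b" "b \<le> 1" "a \<noteq> b" "0 < p" "p < 1"
  shows "0 < p*a + (1-p)*b" "p*a + (1-p)*b < 1"
proof -
  have "0 < a \<or> 0 < b" using assms by auto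
  then show "0 < p*a + (1-p)*b"
  proof
    assume "0 < a" then have "0 < p*a" using assms by simp
    moreover have "0 \<le> (1-p)*b" using assms by simp
    ultimately show ?thesis by linarith
  next
    assume "0 < b" then have "0 < (1-p)*b" using assms by simp
    moreover have "0 \<le> p*a" using assms by simp
    ultimately show ?thesis by linarith
  qed
  have "a < 1 \<or> b < 1" using assms by auto
  then show "p*a + (1-p)*b < 1"
  proof
    assume "a < 1" then have "p*a < p" using assms by simp
    moreover have "(1-p)*b \<le> 1-p" using assms by (simp add: mult_left_le)
    ultimately show ?thesis by linarith
  next
    assume "b < 1" then have "(1-p)*b < 1-p" using assms by simp
    moreover have "p*a \<le> p" using assms by (simp add: mult_left_le)
    ultimately show ?thesis by linarith
  qed
qed
lemma ratio_pos:
  fixes m u x :: real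
  assumes "0 \<le> m" "m \<le> 1" "0 < u" "u < 1" "0 < x" "x < 1"
  shows "0 < m*u/x + (1-m)*(1-u)/(1-x)"
proof -
  have h1: "0 \<le> m*u/x" using assms by simp
  have h2: "0 \<le> (1-m)*(1-u)/(1-x)" using assms by simp
  have "0 < m \<or> 0 < 1 - m" by auto
  moreover have "0 < m \<Longrightarrow> 0 < m*u/x" using assms by simp
  moreover have "0 < 1 - m \<Longrightarrow> 0 < (1-m)*(1-u)/(1-x)" using assms by simp
  ultimately show ?thesis using h1 h2 by linarith
qed

lemma factors_pos:
  fixes a b p u :: real
  assumes "0 \<le> a" "a \<le> 1" "0 \<le> b" "b \<le> 1" "a \<noteq> b" "0 < p" "p < 1" "0 < u" "u < 1"
  defines "x \<equiv> p*a + (1-p)*b"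
  defines "L \<equiv> 2 * inverse (x*(1-x)) * ((a-b)/2) * (u - x)"
  shows "0 < 1 + (1-p)*L" "0 < 1 - p*L"
proof -
  have x0: "0 < x" "x < 1" using xbar_bounds[OF assms(1-7)] x_def by auto
  have nz: "x \<noteq> 0" "1 - x \<noteq> 0" using x0 by auto
  have Ld: "L = (a-b)*(u-x)/(x*(1-x))" unfolding L_def by (simp add: divide_simps)
  have ax: "(1-p)*(a-b) = a - x" "p*(a-b) = x - b" unfolding x_def by algebra+
  have sp: "\<And>m. m*u/x + (1-m)*(1-u)/(1-x) = (m*u*(1-x) + (1-m)*(1-u)*x)/(x*(1-x))"
    using nz by (simp add: add_divide_distrib)
  have e1: "1 + (1-p)*L = a*u/x + (1-a)*(1-u)/(1-x)"
  proof -
    have "1 + (1-p)*L = 1 + (a-x)*(u-x)/(x*(1-x))" unfolding Ld using ax by (simp add: mult.assoc[symmetric])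
    also have "\<dots> = (x*(1-x) + (a-x)*(u-x))/(x*(1-x))" using nz by (simp add: add_divide_distrib)
    also have "\<dots> = (a*u*(1-x) + (1-a)*(1-u)*x)/(x*(1-x))" by (simp add: algebra_simps)
    finally show ?thesis using sp by simp
  qed
  have e2: "1 - p*L = b*u/x + (1-b)*(1-u)/(1-x)"
  proof -
    have "1 - p*L = 1 - (x-b)*(u-x)/(x*(1-x))" unfolding Ld using ax by (simp add: mult.assoc[symmetric])
    also have "\<dots> = (x*(1-x) - (x-b)*(u-x))/(x*(1-x))" using nz by (simp add: diff_divide_distrib)
    also have "\<dots> = (b*u*(1-x) + (1-b)*(1-u)*x)/(x*(1-x))" by (simp add: algebra_simps)
    finally show ?thesis using sp by simp
  qed
  show "0 < 1 + (1-p)*L" unfolding e1 by (rule ratio_pos) (use assms x0 in auto)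
  show "0 < 1 - p*L" unfolding e2 by (rule ratio_pos) (use assms x0 in auto)
qed


lemma other_exists:
  assumes "card (UNIV :: 'n::finite set) \<ge> 2"
  shows "\<exists>j::'n. j \<noteq> i"
proof (rule ccontr)
  assume "\<not> (\<exists>j::'n. j \<noteq> i)"
  then have eq: "(UNIV :: 'n set) = {i}" by auto
  have "card (UNIV::'n set) = card {i}" by (simp only: eq)
  then show False using assms by simp
qed

lemma main_pos_neg:
  fixes p1 :: real and m1 m2 :: "'n::finite \<Rightarrow> real" and mu1 :: "'n \<Rightarrow> real"
  assumes card2: "card (UNIV :: 'n set) \<ge> 2"
    and p0: "0 < p1" and p1: "p1 < 1"
    and m1b: "\<forall>i. 0 \<le> m1 i \<and> m1 i \<le> 1" and m2b: "\<forall>i. 0 \<le> m2 i \<and> m2 i \<le> 1"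
    and sig: "\<forall>i j. i \<noteq> j \<longrightarrow> 4 * p1 * (1 - p1) * mustar m1 m2 i * mustar m1 m2 j \<noteq> 0"
    and mub: "\<forall>i. 0 < mu1 i \<and> mu1 i < 1"
  defines "l \<equiv> lam p1 m1 m2 mu1"
  shows "(\<forall>i. l i > 0) \<longrightarrow> (\<forall>i. EM_M p1 m1 m2 l i > l i)"
    and "(\<forall>i. l i < 0) \<longrightarrow> (\<forall>i. EM_M p1 m1 m2 l i < l i)"
proof -
  have ms: "mustar m1 m2 i \<noteq> 0" for i
  proof -
    obtain j where "j \<noteq> i" using other_exists[OF card2] by blast
    then show ?thesis using sig by (metis mult_zero_right)
  qed
  have neq: "m1 i \<noteq> m2 i" for i using ms[of i] unfolding mustar_def by simp
  have xb: "0 < xbar p1 m1 m2 i" "xbar p1 m1 m2 i < 1" for i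
    unfolding xbar_def using xbar_bounds[of "m1 i" "m2 i" p1] m1b m2b neq p0 p1 by auto
  have S0: "Svar p1 m1 m2 i > 0" for i unfolding Svar_def using xb[of i] by simp
  have c0: "coef p1 m1 m2 i \<noteq> 0" for i unfolding coef_def using S0[of i] ms[of i] by simp
  have fp: "0 < 1 + (1-p1) * l j \<and> 0 < 1 - p1 * l j" for j
    using factors_pos[of "m1 j" "m2 j" p1 "mu1 j"] m1b m2b neq p0 p1 mub
    unfolding l_def lam_def coef_def Svar_def xbar_def mustar_def by auto
  have mu: "mu1_of p1 m1 m2 l i = mu1 i" for i
    unfolding mu1_of_def l_def lam_def using c0[of i] by simp
  have Lam: "mu1 i * (1 - mu1 i) > 0" for i using mub by simp
  have P1: "(\<Prod>j\<in>UNIV. 1 + (1 - p1) * l j) > 0" by (rule prod_pos) (use fp in auto)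
  have P2: "(\<Prod>j\<in>UNIV. 1 - p1 * l j) > 0" by (rule prod_pos) (use fp in auto)
  have Z: "Z1 p1 l > 0" unfolding Z1_def
    using P1 P2 p0 p1 by (simp add: add_pos_pos)
  have EM: "EM_M p1 m1 m2 l i - l i =
      ((coef p1 m1 m2 i)^2 * p1 * (1 - p1) * (mu1 i * (1 - mu1 i)) / Z1 p1 l) * (B1 p1 l i - B2 p1 l i)" for i
    unfolding EM_M_def Let_def mu by simp
  have K: "(coef p1 m1 m2 i)^2 * p1 * (1 - p1) * (mu1 i * (1 - mu1 i)) / Z1 p1 l > 0" for i
    using c0[of i] p0 p1 Lam[of i] Z by simp
  show "(\<forall>i. l i > 0) \<longrightarrow> (\<forall>i. EM_M p1 m1 m2 l i > l i)"
  proof (intro impI allI)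
    fix i :: 'n assume lp: "\<forall>i. l i > 0"
    obtain j where j: "j \<noteq> i" using other_exists[OF card2, of i] by blast
    have "B2 p1 l i < B1 p1 l i"
    proof -
      have ord: "1 - p1 * l k < 1 + (1 - p1) * l k" for k
      proof -
        have "0 < p1 * l k" "0 < (1 - p1) * l k" using lp p0 p1 by simp_all
        then show ?thesis by linarith
      qed
      show ?thesis unfolding B1_def B2_def
        by (rule prod_mono_strict[of j]) (use j ord fp in \<open>auto intro: less_imp_le\<close>)
    qed
    then have "EM_M p1 m1 m2 l i - l i > 0" unfolding EM by (intro mult_pos_pos[OF K]) simp
    then show "EM_M p1 m1 m2 l i > l i" by simp
  qed
  show "(\<forall>i. l i < 0) \<longrightarrow> (\<forall>i. EM_M p1 m1 m2 l i < l i)"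
  proof (intro impI allI)
    fix i :: 'n assume lp: "\<forall>i. l i < 0"
    obtain j where j: "j \<noteq> i" using other_exists[OF card2, of i] by blast
    have "B1 p1 l i < B2 p1 l i"
    proof -
      have ord: "1 + (1 - p1) * l k < 1 - p1 * l k" for k
      proof -
        have "p1 * l k < 0" "(1 - p1) * l k < 0" using lp p0 p1 by (simp_all add: mult_pos_neg)
        then show ?thesis by linarith
      qed
      show ?thesis unfolding B1_def B2_def
        by (rule prod_mono_strict[of j]) (use j ord fp in \<open>auto intro: less_imp_le\<close>)
    qed
    then have "EM_M p1 m1 m2 l i - l i < 0" unfolding EM by (intro mult_pos_neg[OF K]) simp
    then show "EM_M p1 m1 m2 l i < l i" by simp
  qed
qed

theorem mainTheorem6:
  fixes p1 :: real and m1 m2 :: "'n::finite \<Rightarrow> real"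
  assumes "card (UNIV :: 'n set) \<ge> 2"
    and "0 < p1" and "p1 < 1"
    and "\<forall>i. 0 \<le> m1 i \<and> m1 i \<le> 1" and "\<forall>i. 0 \<le> m2 i \<and> m2 i \<le> 1"
    and "\<forall>i j. i \<noteq> j \<longrightarrow> 4 * p1 * (1 - p1) * mustar m1 m2 i * mustar m1 m2 j \<noteq> 0"
  shows "(\<forall>mu1. (\<forall>i. 0 < mu1 i \<and> mu1 i < 1) \<longrightarrow>
            (\<forall>i. lam p1 m1 m2 mu1 i > 0) \<longrightarrow>
            (\<forall>i. EM_M p1 m1 m2 (lam p1 m1 m2 mu1) i > lam p1 m1 m2 mu1 i))
       \<and> (\<forall>mu1. (\<forall>i. 0 < mu1 i \<and> mu1 i < 1) \<longrightarrow>
            (\<forall>i. lam p1 m1 m2 mu1 i < 0) \<longrightarrow>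
            (\<forall>i. EM_M p1 m1 m2 (lam p1 m1 m2 mu1) i < lam p1 m1 m2 mu1 i))"
  using main_pos_neg[OF assms] by blast

end
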